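(* Let $m,k\in\mathbb{N}$ and let $\gamma\in\mathbb{C}$ with $\gamma,\ -2m-\gamma\notin\mathbb{Z}_0^-$. Then \[ {}_3F_2\left[\begin{array}{r} -2m-1,\ 1+k,\ \gamma;\\ -2m-1-k,\ -2m-\gamma;\end{array}1\right]_{2m+1}=0. \]
   Context: $\mathbb{N}=\{1,2,3,\dots\}$, $\mathbb{Z}_0^-=\{0,-1,-2,\dots\}$. For $a\in\mathbb{C}$ and $n\in\mathbb{N}_0$, $(a)_0=1$ and $(a)_n=a(a+1)\cdots(a+n-1)$. For $N\in\mathbb{N}_0$, ${}_3F_2\left[\begin{array}{r} a_1,a_2,a_3;\\ b_1,b_2;\end{array}z\right]_N=\sum_{n=0}^{N}\frac{(a_1)_n(a_2)_n(a_3)_n}{(b_1)_n(b_2)_n}\frac{z^n}{n!}$ (the sum of the first $N+1$ terms), defined whenever $(b_1)_n(b_2)_n\neq0$ for $0\le n\le N$. *)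

theory Defs
  imports Complex_Main "HOL-Library.Nonpos_Ints"
begin

definition hyp3F2_trunc ::
  "complex \<Rightarrow> complex \<Rightarrow> complex \<Rightarrow> complex \<Rightarrow> complex \<Rightarrow> complex \<Rightarrow> nat \<Rightarrow> complex" where
  "hyp3F2_trunc a1 a2 a3 b1 b2 z N =
     (\<Sum>n=0..N. pochhammer a1 n * pochhammer a2 n * pochhammer a3 n
                 / (pochhammer b1 n * pochhammer b2 n) * z ^ n / of_nat (fact n))"

end

theory Submission
  imports Defs
begin

lemma factA:
  assumes "n \<le> N"
  shows "pochhammer (- of_nat N :: complex) n = (-1)^n * of_nat (N choose n) * fact n"
proof -
  have "(of_nat N gchoose n :: complex) = (-1)^n * pochhammer (- of_nat N) n / fact n"
    by (rule gbinomial_pochhammer)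
  hence h0: "fact n * (of_nat N gchoose n) = (-1)^n * pochhammer (- of_nat N :: complex) n"
    by (simp add: field_simps)
  hence h: "(-1)^n * (of_nat N gchoose n) * fact n = (-1)^n * ((-1)^n * pochhammer (- of_nat N :: complex) n)"
    by (metis mult.commute mult.assoc)
  have "((-1::complex)^n) * (-1)^n = 1"
    by (simp add: power_mult_distrib[symmetric])
  hence "pochhammer (- of_nat N :: complex) n = (-1)^n * (of_nat N gchoose n) * fact n"
    using h by (metis mult.assoc mult_1)
  thus ?thesis by (simp add: binomial_gbinomial)
qed

lemma factB: "(fact (k+n) :: complex) = fact k * pochhammer (1 + of_nat k) n"
  using pochhammer_product'[of "1::complex" k n] by (simp add: pochhammer_fact add.commute)

lemma factC:
  assumes "n \<le> M"
  shows "pochhammer (- of_nat M :: complex) n * fact (M - n) = (-1)^n * fact M"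
proof -
  have "pochhammer (- of_nat M :: complex) n = (-1)^n * pochhammer (of_nat M - of_nat n + 1) n"
    by (rule pochhammer_minus)
  moreover have "(fact M :: complex) = fact (M - n) * pochhammer (of_nat (M - n) + 1) n"
    using pochhammer_product'[of "1::complex" "M-n" n] assms
    by (simp add: pochhammer_fact add.commute)
  ultimately show ?thesis using assms by (simp add: of_nat_diff algebra_simps)
qed

lemma factD:
  assumes "n \<le> N"
  shows "pochhammer (1 - of_nat N - g :: complex) n * pochhammer g (N - n) = (-1)^n * pochhammer g N"
proof -
  have "pochhammer (- (g + of_nat N - 1) :: complex) n = (-1)^n * pochhammer (g + of_nat N - 1 - of_nat n + 1) n"
    by (rule pochhammer_minus)
  moreover have "pochhammer g N = pochhammer g (N - n) * pochhammer (g + of_nat (N - n)) n"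
    using pochhammer_product'[of g "N-n" n] assms by simp
  ultimately show ?thesis using assms by (simp add: of_nat_diff algebra_simps)
qed

lemma term_eq:
  fixes g :: complex
  assumes "n \<le> N" "pochhammer g N \<noteq> 0"
  shows "pochhammer (- of_nat N) n * pochhammer (1 + of_nat k) n * pochhammer g n
     / (pochhammer (- of_nat N - of_nat k) n * pochhammer (1 - of_nat N - g) n) * 1 ^ n / of_nat (fact n)
   = (-1)^n * (of_nat (N choose n) * fact (k+n) * fact (N+k-n) * pochhammer g n * pochhammer g (N-n))
      / (fact k * fact (N+k) * pochhammer g N)"
proof -
  have A: "pochhammer (- of_nat N :: complex) n = (-1)^n * of_nat (N choose n) * fact n"
    using factA assms by blast
  have C0: "pochhammer (- of_nat (N+k) :: complex) n * fact (N + k - n) = (-1)^n * fact (N+k)"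
    using factC[of n "N+k"] assms by simp
  have C: "pochhammer (- of_nat N - of_nat k :: complex) n * fact (N + k - n) = (-1)^n * fact (N+k)"
    using C0 by (simp add: algebra_simps)
  have D: "pochhammer (1 - of_nat N - g) n * pochhammer g (N - n) = (-1)^n * pochhammer g N"
    using factD assms by blast
  have B: "(fact (k+n) :: complex) = fact k * pochhammer (1 + of_nat k) n" by (rule factB)
  have nz1: "pochhammer g (N - n) \<noteq> 0" using D assms(2) by auto
  have nz2: "pochhammer (1 - of_nat N - g) n \<noteq> 0" using D assms(2) by auto
  have nz3: "pochhammer (- of_nat N - of_nat k :: complex) n \<noteq> 0" using C by auto
  have e1: "pochhammer (- of_nat N - of_nat k :: complex) n = (-1)^n * fact (N+k) / fact (N + k - n)"
    using C by (simp add: field_simps)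
  have e2: "pochhammer (1 - of_nat N - g) n = (-1)^n * pochhammer g N / pochhammer g (N - n)"
    using D nz1 by (simp add: field_simps)
  have e3: "pochhammer (1 + of_nat k :: complex) n = fact (k+n) / fact k"
    using B by (simp add: field_simps)
  have sq: "((-1::complex)^n) * (-1)^n = 1"
    by (simp add: power_mult_distrib[symmetric])
  show ?thesis
    unfolding A e1 e2 e3 using assms(2) nz1 sq
    by (simp add: field_simps)
qed

lemma sym_sum:
  fixes g :: complex
  assumes "odd N"
  shows "(\<Sum>n=0..N. (-1)^n * (of_nat (N choose n) * fact (k+n) * fact (N+k-n) * pochhammer g n * pochhammer g (N-n))) = 0"
    (is "(\<Sum>n=0..N. ?f n) = 0")
proof -
  have "(\<Sum>n=0..N. ?f n) = (\<Sum>n=0..N. ?f (N + 0 - n))"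
    by (rule sum.atLeastAtMost_rev)
  also have "\<dots> = (\<Sum>n=0..N. - ?f n)"
  proof (rule sum.cong)
    fix i assume "i \<in> {0..N}"
    hence i: "i \<le> N" by simp
    have p: "((-1::complex)^(N-i)) = -((-1)^i)"
    proof -
      have "((-1::complex)^(N-i)) * (-1)^i = (-1)^N" using i
        by (metis le_add_diff_inverse2 power_add)
      also have "\<dots> = -1" using assms by simp
      finally have "((-1::complex)^(N-i)) * (-1)^i = -1" .
      hence "((-1::complex)^(N-i)) * (-1)^i * (-1)^i = -1 * (-1)^i" by simp
      moreover have "((-1::complex)^i) * (-1)^i = 1"
        by (simp add: power_mult_distrib[symmetric])
      ultimately show ?thesis by (simp add: mult.assoc)
    qed
    have c: "N choose (N - i) = N choose i" using i by (rule binomial_symmetric[symmetric])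
    have d1: "k + (N - i) = N + k - i" using i by simp
    have d2: "N + k - (N - i) = k + i" using i by simp
    have d3: "N - (N - i) = i" using i by simp
    show "?f (N + 0 - i) = - ?f i"
      using p c d1 d2 d3 by (simp add: algebra_simps)
  qed simp
  also have "\<dots> = - (\<Sum>n=0..N. ?f n)" by (simp add: sum_negf)
  finally show ?thesis by simp
qed

theorem mainTheorem12:
  fixes m k :: nat and \<gamma> :: complex
  assumes "m \<ge> 1" and "k \<ge> 1"
    and "\<gamma> \<notin> \<int>\<^sub>\<le>\<^sub>0" and "- 2 * of_nat m - \<gamma> \<notin> \<int>\<^sub>\<le>\<^sub>0"
  shows "hyp3F2_trunc (- 2 * of_nat m - 1) (1 + of_nat k) \<gamma>
           (- 2 * of_nat m - 1 - of_nat k) (- 2 * of_nat m - \<gamma>) 1 (2 * m + 1) = 0"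
proof -
  define N where "N = 2 * m + 1"
  have oN: "odd N" unfolding N_def by simp
  have pz: "pochhammer \<gamma> N \<noteq> 0"
    using assms(3) by (auto simp: pochhammer_eq_0_iff)
  have e1: "(- 2 * of_nat m - 1 :: complex) = - of_nat N" unfolding N_def by simp
  have e2: "(- 2 * of_nat m - 1 - of_nat k :: complex) = - of_nat N - of_nat k" unfolding N_def by simp
  have e3: "(- 2 * of_nat m - \<gamma> :: complex) = 1 - of_nat N - \<gamma>" unfolding N_def by simp
  define c where "c = 1 / (fact k * fact (N+k) * pochhammer \<gamma> N :: complex)"
  have "hyp3F2_trunc (- 2 * of_nat m - 1) (1 + of_nat k) \<gamma>
           (- 2 * of_nat m - 1 - of_nat k) (- 2 * of_nat m - \<gamma>) 1 (2 * m + 1)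
     = (\<Sum>n=0..N. c * ((-1)^n * (of_nat (N choose n) * fact (k+n) * fact (N+k-n) * pochhammer \<gamma> n * pochhammer \<gamma> (N-n))))"
    unfolding hyp3F2_trunc_def e1 e2 e3 N_def[symmetric]
  proof (rule sum.cong)
    fix n assume "n \<in> {0..N}"
    hence n: "n \<le> N" by simp
    show "pochhammer (- of_nat N) n * pochhammer (1 + of_nat k) n * pochhammer \<gamma> n
     / (pochhammer (- of_nat N - of_nat k) n * pochhammer (1 - of_nat N - \<gamma>) n) * 1 ^ n / of_nat (fact n)
      = c * ((-1)^n * (of_nat (N choose n) * fact (k+n) * fact (N+k-n) * pochhammer \<gamma> n * pochhammer \<gamma> (N-n)))"
      unfolding term_eq[OF n pz] c_def by simp
  qed simp
  also have "\<dots> = c * 0"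
    unfolding sum_distrib_left[symmetric] using sym_sum[OF oN] by simp
  finally show ?thesis by simp
qed

end
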